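(* Let $n\ge2$, $h=0$, $\epsilon\in[-1,1]$. For any two distinct stable states $s_1,s_2\in\mathcal X_s$, $$\Gamma_s:=\Phi(s_1,s_2)-H(s_1)=\begin{cases}\frac{n^2}{2}+|\epsilon|n & n\text{ even},\\ \frac{n^2-1}{2}+|\epsilon|(n+1) & n\text{ odd}.\end{cases}$$
   Context: Setup. The graph $\mathcal G(2,n)$ has vertex set $V=V^{(1)}\cup V^{(2)}$ with $V^{(1)}=\{1,\dots,n\}$, $V^{(2)}=\{n+1,\dots,2n\}$; its edge set is $E=E_{\mathrm{int}}\cup E_{\mathrm{cross}}$, where $E_{\mathrm{int}}$ consists of all pairs of distinct vertices in the same $V^{(k)}$ and $E_{\mathrm{cross}}=\{\{i,i+n\}:1\le i\le n\}$. The configuration space is $\mathcal X=\{-1,+1\}^V$ and $H(\sigma)=-\sum_{\{i,j\}\in E_{\mathrm{int}}}\sigma_i\sigma_j-\epsilon\sum_{\{i,j\}\in E_{\mathrm{cross}}}\sigma_i\sigma_j-h\sum_{i\in V}\sigma_i$. The stable states $\mathcal X_s$ are the global minimizers of $H$. Two configurations are neighbours if they differ at exactly one vertex; a path is a finite sequence of configurations with consecutive ones neighbours; $\Phi(\eta,\eta')=\min_{\omega:\eta\to\eta'}\max_{\zeta\in\omega}H(\zeta)$, the minimum over paths from $\eta$ to $\eta'$. *)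

theory Defs
  imports Main Complex_Main
begin

text \<open>Graph G(2,n): vertices 1..2n; V1 = 1..n, V2 = n+1..2n.\<close>

definition verts :: "nat \<Rightarrow> nat set" where
  "verts n = {1..2*n}"

text \<open>Internal edges as ordered pairs (i,j) with i < j in the same block
  (each unordered edge counted once).\<close>
definition int_edges :: "nat \<Rightarrow> (nat \<times> nat) set" where
  "int_edges n = {(i,j). 1 \<le> i \<and> i < j \<and> j \<le> n} \<union> {(i,j). n+1 \<le> i \<and> i < j \<and> j \<le> 2*n}"

definition cross_edges :: "nat \<Rightarrow> (nat \<times> nat) set" where
  "cross_edges n = {(i, i+n) | i. 1 \<le> i \<and> i \<le> n}"

text \<open>Configurations: spins +1/-1 on the vertices, 0 (irrelevant dummy value) elsewhere.\<close>
definition configs :: "nat \<Rightarrow> (nat \<Rightarrow> int) set" where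
  "configs n = {\<sigma>. (\<forall>i\<in>verts n. \<sigma> i = 1 \<or> \<sigma> i = -1) \<and> (\<forall>i. i \<notin> verts n \<longrightarrow> \<sigma> i = 0)}"

definition Ham :: "nat \<Rightarrow> real \<Rightarrow> real \<Rightarrow> (nat \<Rightarrow> int) \<Rightarrow> real" where
  "Ham n \<epsilon> h \<sigma> =
     - (\<Sum>(i,j)\<in>int_edges n. real_of_int (\<sigma> i * \<sigma> j))
     - \<epsilon> * (\<Sum>(i,j)\<in>cross_edges n. real_of_int (\<sigma> i * \<sigma> j))
     - h * (\<Sum>i\<in>verts n. real_of_int (\<sigma> i))"

definition stable_states :: "nat \<Rightarrow> real \<Rightarrow> real \<Rightarrow> (nat \<Rightarrow> int) set" where
  "stable_states n \<epsilon> h =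
     {\<sigma> \<in> configs n. \<forall>\<tau>\<in>configs n. Ham n \<epsilon> h \<sigma> \<le> Ham n \<epsilon> h \<tau>}"

definition neighbours :: "nat \<Rightarrow> (nat \<Rightarrow> int) \<Rightarrow> (nat \<Rightarrow> int) \<Rightarrow> bool" where
  "neighbours n \<sigma> \<tau> \<longleftrightarrow> \<sigma> \<in> configs n \<and> \<tau> \<in> configs n \<and> card {i \<in> verts n. \<sigma> i \<noteq> \<tau> i} = 1"

definition is_path :: "nat \<Rightarrow> (nat \<Rightarrow> int) list \<Rightarrow> (nat \<Rightarrow> int) \<Rightarrow> (nat \<Rightarrow> int) \<Rightarrow> bool" where
  "is_path n p \<eta> \<eta>' \<longleftrightarrow> p \<noteq> [] \<and> hd p = \<eta> \<and> last p = \<eta>' \<and> set p \<subseteq> configs n \<and>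
     (\<forall>k. Suc k < length p \<longrightarrow> neighbours n (p ! k) (p ! Suc k))"

definition Phi :: "nat \<Rightarrow> real \<Rightarrow> real \<Rightarrow> (nat \<Rightarrow> int) \<Rightarrow> (nat \<Rightarrow> int) \<Rightarrow> real" where
  "Phi n \<epsilon> h \<eta> \<eta>' = Min {Max (Ham n \<epsilon> h ` set p) | p. is_path n p \<eta> \<eta>'}"

end

theory Submission
  imports Defs
begin


lemma pair_sum:
  fixes f :: "nat \<Rightarrow> int"
  shows "2 * (\<Sum>(i,j)\<in>{(i,j). lo+1 \<le> i \<and> i < j \<and> j \<le> lo+m}. f i * f j)
     = (\<Sum>i\<in>{lo+1..lo+m}. f i)^2 - (\<Sum>i\<in>{lo+1..lo+m}. (f i)^2)"
proof (induction m)
  case 0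
  have e: "{(i,j). lo+1 \<le> i \<and> i < j \<and> j \<le> lo+(0::nat)} = {}" by auto
  show ?case by (subst e) simp
next
  case (Suc m)
  let ?P = "\<lambda>m. {(i,j). lo+1 \<le> i \<and> i < j \<and> j \<le> lo+m}"
  have fin: "finite (?P m)"
    by (rule finite_subset[of _ "{..lo+m} \<times> {..lo+m}"]) auto
  have eq: "?P (Suc m) = ?P m \<union> (\<lambda>i. (i, lo + Suc m)) ` {lo+1..lo+m}" by auto
  have disj: "?P m \<inter> (\<lambda>i. (i, lo + Suc m)) ` {lo+1..lo+m} = {}" by auto
  have "(\<Sum>(i,j)\<in>?P (Suc m). f i * f j) = (\<Sum>(i,j)\<in>?P m. f i * f j)
      + (\<Sum>(i,j)\<in>(\<lambda>i. (i, lo + Suc m)) ` {lo+1..lo+m}. f i * f j)"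
    unfolding eq by (rule sum.union_disjoint[OF fin _ disj]) simp
  also have "(\<Sum>(i,j)\<in>(\<lambda>i. (i, lo + Suc m)) ` {lo+1..lo+m}. f i * f j)
     = (\<Sum>i\<in>{lo+1..lo+m}. f i * f (lo + Suc m))"
    by (subst sum.reindex) (auto simp: inj_on_def)
  also have "\<dots> = (\<Sum>i\<in>{lo+1..lo+m}. f i) * f (lo + Suc m)"
    by (simp add: sum_distrib_right)
  finally have A: "(\<Sum>(i,j)\<in>?P (Suc m). f i * f j) = (\<Sum>(i,j)\<in>?P m. f i * f j) + (\<Sum>i\<in>{lo+1..lo+m}. f i) * f (lo + Suc m)" .
  have iv: "{lo+1..lo+Suc m} = insert (lo + Suc m) {lo+1..lo+m}" by auto
  show ?case
    unfolding A iv using Suc.IH by (simp add: power2_eq_square algebra_simps)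
qed


definition S1 :: "nat \<Rightarrow> (nat \<Rightarrow> int) \<Rightarrow> int" where "S1 n \<sigma> = (\<Sum>i\<in>{1..n}. \<sigma> i)"
definition S2 :: "nat \<Rightarrow> (nat \<Rightarrow> int) \<Rightarrow> int" where "S2 n \<sigma> = (\<Sum>i\<in>{n+1..n+n}. \<sigma> i)"
definition XX :: "nat \<Rightarrow> (nat \<Rightarrow> int) \<Rightarrow> int" where "XX n \<sigma> = (\<Sum>i\<in>{1..n}. \<sigma> i * \<sigma> (i+n))"

lemma cfg_val: "\<sigma> \<in> configs n \<Longrightarrow> 1 \<le> i \<Longrightarrow> i \<le> 2*n \<Longrightarrow> \<sigma> i = 1 \<or> \<sigma> i = -1"
  by (auto simp: configs_def verts_def)

lemma sq_sum: "(\<forall>i\<in>A. f i = 1 \<or> f i = (-1::int)) \<Longrightarrow> (\<Sum>i\<in>A. (f i)^2) = int (card A)"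
proof -
  assume "\<forall>i\<in>A. f i = 1 \<or> f i = (-1::int)"
  then have "(\<Sum>i\<in>A. (f i)^2) = (\<Sum>i\<in>A. 1)" by (intro sum.cong) auto
  then show ?thesis by simp
qed

lemma int_part:
  assumes "\<sigma> \<in> configs n"
  shows "2 * (\<Sum>(i,j)\<in>int_edges n. \<sigma> i * \<sigma> j) = (S1 n \<sigma>)^2 - n + ((S2 n \<sigma>)^2 - n)"
proof -
  let ?P = "\<lambda>lo m. {(i::nat,j). lo+1 \<le> i \<and> i < j \<and> j \<le> lo+m}"
  have e: "int_edges n = ?P 0 n \<union> ?P n n" unfolding int_edges_def by auto
  have f1: "finite (?P lo m)" for lo m
    by (rule finite_subset[of _ "{..lo+m} \<times> {..lo+m}"]) auto
  have d: "?P 0 n \<inter> ?P n n = {}" by auto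
  have "(\<Sum>(i,j)\<in>int_edges n. \<sigma> i * \<sigma> j) = (\<Sum>(i,j)\<in>?P 0 n. \<sigma> i * \<sigma> j) + (\<Sum>(i,j)\<in>?P n n. \<sigma> i * \<sigma> j)"
    unfolding e by (rule sum.union_disjoint[OF f1 f1 d])
  moreover have "2 * (\<Sum>(i,j)\<in>?P 0 n. \<sigma> i * \<sigma> j) = (S1 n \<sigma>)^2 - n"
  proof -
    have "(\<Sum>i\<in>{0+1..0+n}. (\<sigma> i)^2) = int (card {0+1..0+n})"
      using assms by (intro sq_sum) (auto dest: cfg_val)
    then show ?thesis using pair_sum[where f=\<sigma> and lo=0 and m=n] by (simp add: S1_def)
  qed
  moreover have "2 * (\<Sum>(i,j)\<in>?P n n. \<sigma> i * \<sigma> j) = (S2 n \<sigma>)^2 - n"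
  proof -
    have "(\<Sum>i\<in>{n+1..n+n}. (\<sigma> i)^2) = int (card {n+1..n+n})"
      using assms by (intro sq_sum) (auto simp: configs_def verts_def)
    then show ?thesis using pair_sum[where f=\<sigma> and lo=n and m=n] by (simp add: S2_def)
  qed
  ultimately show ?thesis by simp
qed

lemma cross_part:
  "(\<Sum>(i,j)\<in>cross_edges n. \<sigma> i * \<sigma> j) = XX n \<sigma>"
proof -
  have "cross_edges n = (\<lambda>i. (i, i+n)) ` {1..n}" unfolding cross_edges_def by auto
  then show ?thesis unfolding XX_def by (simp add: sum.reindex inj_on_def)
qed

lemma Ham_formula:
  assumes "\<sigma> \<in> configs n"
  shows "Ham n \<epsilon> 0 \<sigma> = - (real_of_int ((S1 n \<sigma>)^2 - n) + real_of_int ((S2 n \<sigma>)^2 - n)) / 2 - \<epsilon> * real_of_int (XX n \<sigma>)"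
proof -
  have a: "(\<Sum>(i,j)\<in>int_edges n. real_of_int (\<sigma> i * \<sigma> j)) = real_of_int (\<Sum>(i,j)\<in>int_edges n. \<sigma> i * \<sigma> j)"
    by (simp add: of_int_sum case_prod_unfold)
  have b: "(\<Sum>(i,j)\<in>cross_edges n. real_of_int (\<sigma> i * \<sigma> j)) = real_of_int (\<Sum>(i,j)\<in>cross_edges n. \<sigma> i * \<sigma> j)"
    by (simp add: of_int_sum case_prod_unfold)
  have c: "real_of_int (\<Sum>(i,j)\<in>int_edges n. \<sigma> i * \<sigma> j) = (real_of_int ((S1 n \<sigma>)^2 - n) + real_of_int ((S2 n \<sigma>)^2 - n)) / 2"
    using arg_cong[OF int_part[OF assms], of real_of_int] by simp
  show ?thesis unfolding Ham_def a b c cross_part by (simp add: field_simps)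
qed


lemma pm_abs: "finite A \<Longrightarrow> (\<forall>i\<in>A. f i = 1 \<or> f i = (-1::int)) \<Longrightarrow> \<bar>sum f A\<bar> \<le> int (card A)"
proof -
  assume h: "\<forall>i\<in>A. f i = 1 \<or> f i = (-1::int)" "finite A"
  have "\<bar>sum f A\<bar> \<le> (\<Sum>i\<in>A. \<bar>f i\<bar>)" by (rule sum_abs)
  also have "\<dots> = (\<Sum>i\<in>A. 1)" using h by (intro sum.cong) auto
  finally show ?thesis by simp
qed

lemma pm_par: "finite A \<Longrightarrow> (\<forall>i\<in>A. f i = 1 \<or> f i = (-1::int)) \<Longrightarrow> even (sum f A - int (card A))"
proof (induction A rule: finite_induct)
  case empty then show ?case by simp
next
  case (insert x F)
  then have "even (sum f F - int (card F))" by auto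
  moreover have "f x = 1 \<or> f x = -1" using insert by auto
  ultimately show ?case using insert by auto
qed

lemma pm_all1: "finite A \<Longrightarrow> (\<forall>i\<in>A. f i = 1 \<or> f i = (-1::int)) \<Longrightarrow> sum f A = int (card A) \<Longrightarrow> i \<in> A \<Longrightarrow> f i = 1"
proof -
  assume h: "finite A" "\<forall>i\<in>A. f i = 1 \<or> f i = (-1::int)" "sum f A = int (card A)" "i \<in> A"
  have s: "(\<Sum>j\<in>A. 1 - f j) = 0" by (simp add: sum_subtractf h(3))
  have "1 - f i = 0"
    by (rule sum_nonneg_0[where f="\<lambda>j. 1 - f j", OF h(1) _ s h(4)]) (use h(2) in force)
  then show ?thesis by simp
qed

lemma pm_allm1: "finite A \<Longrightarrow> (\<forall>i\<in>A. f i = 1 \<or> f i = (-1::int)) \<Longrightarrow> sum f A = - int (card A) \<Longrightarrow> i \<in> A \<Longrightarrow> f i = -1"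
proof -
  assume h: "finite A" "\<forall>i\<in>A. f i = 1 \<or> f i = (-1::int)" "sum f A = - int (card A)" "i \<in> A"
  have s: "(\<Sum>j\<in>A. 1 + f j) = 0" by (simp add: sum.distrib h(3))
  have "1 + f i = 0"
    by (rule sum_nonneg_0[where f="\<lambda>j. 1 + f j", OF h(1) _ s h(4)]) (use h(2) in force)
  then show ?thesis by simp
qed

lemma b1: "\<sigma> \<in> configs n \<Longrightarrow> \<forall>i\<in>{1..n}. \<sigma> i = 1 \<or> \<sigma> i = -1"
  by (auto simp: configs_def verts_def)
lemma b2: "\<sigma> \<in> configs n \<Longrightarrow> \<forall>i\<in>{n+1..n+n}. \<sigma> i = 1 \<or> \<sigma> i = -1"
  by (auto simp: configs_def verts_def)

lemma S1_abs: "\<sigma> \<in> configs n \<Longrightarrow> \<bar>S1 n \<sigma>\<bar> \<le> int n"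
  using pm_abs[OF _ b1] by (simp add: S1_def)
lemma S2_abs: "\<sigma> \<in> configs n \<Longrightarrow> \<bar>S2 n \<sigma>\<bar> \<le> int n"
  using pm_abs[OF _ b2] by (simp add: S2_def)
lemma S1_par: "\<sigma> \<in> configs n \<Longrightarrow> even (S1 n \<sigma> - int n)"
  using pm_par[OF _ b1] by (simp add: S1_def)
lemma S2_par: "\<sigma> \<in> configs n \<Longrightarrow> even (S2 n \<sigma> - int n)"
  using pm_par[OF _ b2] by (simp add: S2_def)

lemma S2_shift: "S2 n \<sigma> = (\<Sum>i\<in>{1..n}. \<sigma> (i+n))"
  unfolding S2_def using sum.shift_bounds_cl_nat_ivl[of \<sigma> 1 n n] by (simp add: add.commute)

lemma pm_ineq1: "(x = 1 \<or> x = -1) \<Longrightarrow> (y = 1 \<or> y = -1) \<Longrightarrow> \<bar>x - y\<bar> \<le> 1 - x * (y::int)"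
  by (elim disjE) auto
lemma pm_ineq2: "(x = 1 \<or> x = -1) \<Longrightarrow> (y = 1 \<or> y = -1) \<Longrightarrow> \<bar>x + y\<bar> \<le> 1 + x * (y::int)"
  by (elim disjE) auto

lemma XX_le: assumes "\<sigma> \<in> configs n" shows "XX n \<sigma> \<le> int n - \<bar>S1 n \<sigma> - S2 n \<sigma>\<bar>"
proof -
  have v: "\<forall>i\<in>{1..n}. (\<sigma> i = 1 \<or> \<sigma> i = -1) \<and> (\<sigma> (i+n) = 1 \<or> \<sigma> (i+n) = -1)"
    using assms by (auto simp: configs_def verts_def)
  have "\<bar>S1 n \<sigma> - S2 n \<sigma>\<bar> = \<bar>\<Sum>i\<in>{1..n}. \<sigma> i - \<sigma> (i+n)\<bar>"
    by (simp add: S1_def S2_shift sum_subtractf)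
  also have "\<dots> \<le> (\<Sum>i\<in>{1..n}. \<bar>\<sigma> i - \<sigma> (i+n)\<bar>)" by (rule sum_abs)
  also have "\<dots> \<le> (\<Sum>i\<in>{1..n}. 1 - \<sigma> i * \<sigma> (i+n))"
    using v by (intro sum_mono pm_ineq1) auto
  also have "\<dots> = int n - XX n \<sigma>" by (simp add: XX_def sum_subtractf)
  finally show ?thesis by simp
qed

lemma XX_ge: assumes "\<sigma> \<in> configs n" shows "XX n \<sigma> \<ge> \<bar>S1 n \<sigma> + S2 n \<sigma>\<bar> - int n"
proof -
  have v: "\<forall>i\<in>{1..n}. (\<sigma> i = 1 \<or> \<sigma> i = -1) \<and> (\<sigma> (i+n) = 1 \<or> \<sigma> (i+n) = -1)"
    using assms by (auto simp: configs_def verts_def)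
  have "\<bar>S1 n \<sigma> + S2 n \<sigma>\<bar> = \<bar>\<Sum>i\<in>{1..n}. \<sigma> i + \<sigma> (i+n)\<bar>"
    by (simp add: S1_def S2_shift sum.distrib)
  also have "\<dots> \<le> (\<Sum>i\<in>{1..n}. \<bar>\<sigma> i + \<sigma> (i+n)\<bar>)" by (rule sum_abs)
  also have "\<dots> \<le> (\<Sum>i\<in>{1..n}. 1 + \<sigma> i * \<sigma> (i+n))"
    using v by (intro sum_mono pm_ineq2) auto
  also have "\<dots> = int n + XX n \<sigma>" by (simp add: XX_def sum.distrib)
  finally show ?thesis by simp
qed

lemma cfg_eq: "\<sigma> \<in> configs n \<Longrightarrow> \<tau> \<in> configs n \<Longrightarrow> (\<forall>i\<in>{1..n}. \<sigma> i = \<tau> i) \<Longrightarrow> (\<forall>i\<in>{n+1..n+n}. \<sigma> i = \<tau> i) \<Longrightarrow> \<sigma> = \<tau>"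
proof
  fix i assume h: "\<sigma> \<in> configs n" "\<tau> \<in> configs n" "\<forall>i\<in>{1..n}. \<sigma> i = \<tau> i" "\<forall>i\<in>{n+1..n+n}. \<sigma> i = \<tau> i"
  show "\<sigma> i = \<tau> i"
  proof (cases "i \<in> verts n")
    case True then have "i \<in> {1..n} \<or> i \<in> {n+1..n+n}" by (auto simp: verts_def)
    then show ?thesis using h by auto
  next
    case False then show ?thesis using h by (auto simp: configs_def)
  qed
qed

lemma step2:
  assumes "neighbours n \<sigma> \<tau>" "A \<subseteq> verts n"
  shows "\<bar>sum \<tau> A - sum \<sigma> A\<bar> \<le> 2"
proof -
  have "card {i \<in> verts n. \<sigma> i \<noteq> \<tau> i} = 1" using assms(1) unfolding neighbours_def by blast
  then obtain i0 where i0: "{i \<in> verts n. \<sigma> i \<noteq> \<tau> i} = {i0}"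
    by (meson card_1_singletonE)
  have c: "\<sigma> \<in> configs n" "\<tau> \<in> configs n" using assms(1) unfolding neighbours_def by blast+
  have i0v: "i0 \<in> verts n" using i0 by blast
  have "sum \<tau> A - sum \<sigma> A = (\<Sum>j\<in>A. \<tau> j - \<sigma> j)" by (simp add: sum_subtractf)
  also have "\<dots> = (\<Sum>j\<in>A. if j = i0 then \<tau> i0 - \<sigma> i0 else 0)"
  proof (rule sum.cong)
    fix j assume "j \<in> A"
    then have "j \<in> verts n" using assms(2) by blast
    then have "j \<noteq> i0 \<Longrightarrow> \<sigma> j = \<tau> j" using i0 by blast
    then show "\<tau> j - \<sigma> j = (if j = i0 then \<tau> i0 - \<sigma> i0 else 0)" by auto
  qed simp
  also have "\<dots> = (if i0 \<in> A then \<tau> i0 - \<sigma> i0 else 0)"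
  proof -
    have "finite A" using assms(2) finite_subset[of A "{1..2*n}"] by (simp add: verts_def)
    then show ?thesis by (simp add: sum.delta)
  qed
  finally have e: "sum \<tau> A - sum \<sigma> A = (if i0 \<in> A then \<tau> i0 - \<sigma> i0 else 0)" .
  have "\<tau> i0 = 1 \<or> \<tau> i0 = -1" "\<sigma> i0 = 1 \<or> \<sigma> i0 = -1"
    using c i0v unfolding configs_def by blast+
  then show ?thesis unfolding e by auto
qed



definition tt :: "nat \<Rightarrow> int" where "tt n = (if even n then 0 else -1)"

lemma upper_arith:
  fixes n :: nat and w :: int and e :: real
  assumes "\<bar>w\<bar> \<le> int n" "even (w - int n)" "0 \<le> e" "e \<le> 1"
  shows "(real n ^ 2 - real_of_int w ^ 2) / 2 + e * (real n - w)
     \<le> (real n ^ 2 - real_of_int (tt n) ^ 2) / 2 + e * (real n - tt n)"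
proof -
  define t where "t = tt n"
  have tv: "t = 0 \<or> t = -1" unfolding t_def tt_def by auto
  have e1: "even (int n - t)" unfolding t_def tt_def by (cases "even n") auto
  have "w - t = (w - int n) + (int n - t)" by simp
  then have ev: "even (w - t)" using e1 assms(2) by (metis even_add)
  have key: "(real n ^ 2 - real_of_int t ^ 2) / 2 + e * (real n - t) - ((real n ^ 2 - real_of_int w ^ 2) / 2 + e * (real n - w))
     = (real_of_int w - t) * ((real_of_int w + t) / 2 + e)"
    by (simp add: field_simps power2_eq_square)
  have "0 \<le> (real_of_int w - t) * ((real_of_int w + t) / 2 + e)"
  proof (cases "w = t")
    case True then show ?thesis by simp
  next
    case False
    with ev have "w \<ge> t + 2 \<or> w \<le> t - 2" by presburger
    then show ?thesis
    proof
      assume h: "w \<ge> t + 2"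
      then have "real_of_int w \<ge> real_of_int t + 2" by simp
      moreover have "real_of_int t \<ge> -1" using tv by auto
      ultimately have "(real_of_int w + t) / 2 + e \<ge> 0" using assms(3) by (simp add: field_simps)
      moreover have "real_of_int w - t \<ge> 0" using h by linarith
      ultimately show ?thesis by (intro mult_nonneg_nonneg)
    next
      assume h: "w \<le> t - 2"
      then have "real_of_int w \<le> real_of_int t - 2" by simp
      moreover have "real_of_int t \<le> 0" using tv by auto
      ultimately have "(real_of_int w + t) / 2 + e \<le> 0" using assms(4) by (simp add: field_simps)
      moreover have "real_of_int w - t \<le> 0" using h by linarith
      ultimately show ?thesis by (intro mult_nonpos_nonpos)
    qed
  qed
  then show ?thesis using key unfolding t_def by linarith
qed

lemma lower_arith:
  fixes n :: nat and v Y :: int and e :: real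
  assumes "n \<ge> 2" "tt n \<le> v" "v \<le> int n" "Y \<le> int n - \<bar>tt n - v\<bar>" "0 \<le> e" "e \<le> 1"
  shows "(real n ^ 2 - real_of_int (tt n) ^ 2) / 2 + e * (real n - tt n)
     \<le> (real n ^ 2 - real_of_int (tt n) ^ 2) / 2 + (real n ^ 2 - real_of_int v ^ 2) / 2 + e * real n - e * Y"
proof -
  define t where "t = tt n"
  have nv: "int n + v \<ge> 2" using assms(1,2) unfolding tt_def by (cases "even n") (auto, presburger)
  have Y: "real_of_int Y \<le> real n - (v - t)" using assms(2,4) unfolding t_def by auto
  have eY: "e * Y \<le> e * (real n - (v - t))" using Y assms(5) by (rule mult_left_mono)
  have "0 \<le> (real n - v) * ((real n + v) / 2 - e)"
  proof (intro mult_nonneg_nonneg)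
    show "0 \<le> real n - real_of_int v" using assms(3) by linarith
    have "real n + real_of_int v \<ge> 2" using nv by linarith
    then show "0 \<le> (real n + real_of_int v) / 2 - e" using assms(6) by (simp add: field_simps)
  qed
  moreover have "(real n - v) * ((real n + v) / 2 - e) = (real n ^ 2 - real_of_int v ^ 2) / 2 + e * v - e * real n"
    by (simp add: field_simps power2_eq_square)
  moreover have "e * (real n - (v - t)) = e * real n - e * v + e * t" by (simp add: algebra_simps)
  moreover have "e * (real n - t) = e * real n - e * t" by (simp add: algebra_simps)
  ultimately show ?thesis using eY unfolding t_def by linarith
qed



definition H0 :: "nat \<Rightarrow> real \<Rightarrow> real" where "H0 n \<epsilon> = -(real n ^ 2 - real n) - \<bar>\<epsilon>\<bar> * real n"

lemma D_formula:
  assumes "\<sigma> \<in> configs n"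
  shows "Ham n \<epsilon> 0 \<sigma> - H0 n \<epsilon> = (real n ^ 2 - real_of_int (S1 n \<sigma>) ^ 2) / 2 + (real n ^ 2 - real_of_int (S2 n \<sigma>) ^ 2) / 2
     + \<bar>\<epsilon>\<bar> * real n - \<epsilon> * real_of_int (XX n \<sigma>)"
  unfolding Ham_formula[OF assms] H0_def by (simp add: field_simps)

lemma terms_nonneg:
  assumes "\<sigma> \<in> configs n"
  shows "0 \<le> (real n ^ 2 - real_of_int (S1 n \<sigma>) ^ 2) / 2"
    "0 \<le> (real n ^ 2 - real_of_int (S2 n \<sigma>) ^ 2) / 2"
    "0 \<le> \<bar>\<epsilon>\<bar> * real n - \<epsilon> * real_of_int (XX n \<sigma>)"
proof -
  have a: "\<bar>real_of_int (S1 n \<sigma>)\<bar> \<le> real n" using S1_abs[OF assms] by linarith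
  then have "\<bar>real_of_int (S1 n \<sigma>)\<bar> ^ 2 \<le> real n ^ 2" by (intro power_mono) auto
  then have "real_of_int (S1 n \<sigma>) ^ 2 \<le> real n ^ 2" by simp
  then show "0 \<le> (real n ^ 2 - real_of_int (S1 n \<sigma>) ^ 2) / 2" by simp
  have b: "\<bar>real_of_int (S2 n \<sigma>)\<bar> \<le> real n" using S2_abs[OF assms] by linarith
  then have "\<bar>real_of_int (S2 n \<sigma>)\<bar> ^ 2 \<le> real n ^ 2" by (intro power_mono) auto
  then have "real_of_int (S2 n \<sigma>) ^ 2 \<le> real n ^ 2" by simp
  then show "0 \<le> (real n ^ 2 - real_of_int (S2 n \<sigma>) ^ 2) / 2" by simp
  have "XX n \<sigma> \<le> int n" "XX n \<sigma> \<ge> - int n" using XX_le[OF assms] XX_ge[OF assms] by linarith+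
  then have x: "\<bar>real_of_int (XX n \<sigma>)\<bar> \<le> real n" by linarith
  have "\<epsilon> * real_of_int (XX n \<sigma>) \<le> \<bar>\<epsilon> * real_of_int (XX n \<sigma>)\<bar>" by simp
  also have "\<dots> = \<bar>\<epsilon>\<bar> * \<bar>real_of_int (XX n \<sigma>)\<bar>" by (simp add: abs_mult)
  also have "\<dots> \<le> \<bar>\<epsilon>\<bar> * real n" using x by (intro mult_left_mono) auto
  finally show "0 \<le> \<bar>\<epsilon>\<bar> * real n - \<epsilon> * real_of_int (XX n \<sigma>)" by simp
qed

lemma Ham_ge: "\<sigma> \<in> configs n \<Longrightarrow> H0 n \<epsilon> \<le> Ham n \<epsilon> 0 \<sigma>"
  using D_formula[where \<sigma>=\<sigma> and n=n and \<epsilon>=\<epsilon>] terms_nonneg(1,2)[where \<sigma>=\<sigma> and n=n] terms_nonneg(3)[where \<sigma>=\<sigma> and n=n and \<epsilon>=\<epsilon>] by linarith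

lemma ground: "\<exists>g\<in>configs n. Ham n \<epsilon> 0 g = H0 n \<epsilon>"
proof -
  define c :: int where "c = (if \<epsilon> \<ge> 0 then 1 else -1)"
  define g where "g = (\<lambda>i. if 1 \<le> i \<and> i \<le> n then 1 else if n+1 \<le> i \<and> i \<le> 2*n then c else (0::int))"
  have gc: "g \<in> configs n" unfolding configs_def verts_def g_def c_def by auto
  have s1: "S1 n g = int n" unfolding S1_def g_def by simp
  have s2: "S2 n g = c * int n"
  proof -
    have "S2 n g = (\<Sum>i\<in>{n+1..n+n}. c)" unfolding S2_def g_def by (intro sum.cong) auto
    then show ?thesis by simp
  qed
  have x: "XX n g = c * int n"
  proof -
    have "XX n g = (\<Sum>i\<in>{1..n}. c)" unfolding XX_def g_def by (intro sum.cong) auto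
    then show ?thesis by simp
  qed
  have cc: "real_of_int c * real_of_int c = 1" "\<epsilon> * real_of_int c = \<bar>\<epsilon>\<bar>" unfolding c_def by auto
  have "Ham n \<epsilon> 0 g - H0 n \<epsilon> = 0"
    unfolding D_formula[OF gc] s1 s2 x
  proof -
    have e1: "\<epsilon> * (real_of_int c * real n) = \<bar>\<epsilon>\<bar> * real n" using cc(2) by (metis mult.assoc)
    have e2: "real_of_int c * (real_of_int c * (real n * real n)) = real n * real n" using cc(1) by (metis mult.assoc mult_1)
    show "(real n ^ 2 - real_of_int (int n) ^ 2) / 2 + (real n ^ 2 - real_of_int (c * int n) ^ 2) / 2 +
    \<bar>\<epsilon>\<bar> * real n - \<epsilon> * real_of_int (c * int n) = 0"
    proof -
      have r: "real_of_int (c * int n) = real_of_int c * real n" by simp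
      have q: "(real_of_int c * real n) ^ 2 = real n ^ 2" using e2 by (simp add: power2_eq_square algebra_simps)
      show ?thesis unfolding r q using e1 by (simp; metis)
    qed
  qed
  then show ?thesis using gc by auto
qed

lemma stable_props:
  assumes "s \<in> stable_states n \<epsilon> 0"
  shows "s \<in> configs n" "Ham n \<epsilon> 0 s = H0 n \<epsilon>" "S1 n s = int n \<or> S1 n s = - int n"
    "S2 n s = int n \<or> S2 n s = - int n" "\<epsilon> * real_of_int (XX n s) = \<bar>\<epsilon>\<bar> * real n"
proof -
  show sc: "s \<in> configs n" using assms unfolding stable_states_def by auto
  obtain g where g: "g \<in> configs n" "Ham n \<epsilon> 0 g = H0 n \<epsilon>" using ground by blast
  have "Ham n \<epsilon> 0 s \<le> Ham n \<epsilon> 0 g" using assms g(1) unfolding stable_states_def by auto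
  then show hs: "Ham n \<epsilon> 0 s = H0 n \<epsilon>" using Ham_ge[OF sc, where \<epsilon>=\<epsilon>] g(2) by linarith
  have h0: "Ham n \<epsilon> 0 s - H0 n \<epsilon> = 0" using hs by simp
  note z = D_formula[OF sc, where \<epsilon>=\<epsilon>] terms_nonneg(1,2)[OF sc] terms_nonneg(3)[OF sc, where \<epsilon>=\<epsilon>]
  have a: "real_of_int (S1 n s) ^ 2 = real n ^ 2"
  proof -
    have "((real n)\<^sup>2 - (real_of_int (S1 n s))\<^sup>2) / 2 = 0" using z(2-4) h0 unfolding z(1) by linarith
    then show ?thesis by simp
  qed
  have "\<bar>real_of_int (S1 n s)\<bar> = real n" using a by (metis abs_of_nat power2_eq_iff_nonneg abs_ge_zero of_nat_0_le_iff power2_abs)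
  then show "S1 n s = int n \<or> S1 n s = - int n" by linarith
  have b: "real_of_int (S2 n s) ^ 2 = real n ^ 2"
  proof -
    have "((real n)\<^sup>2 - (real_of_int (S2 n s))\<^sup>2) / 2 = 0" using z(2-4) h0 unfolding z(1) by linarith
    then show ?thesis by simp
  qed
  have "\<bar>real_of_int (S2 n s)\<bar> = real n" using b by (metis abs_of_nat power2_eq_iff_nonneg abs_ge_zero of_nat_0_le_iff power2_abs)
  then show "S2 n s = int n \<or> S2 n s = - int n" by linarith
  show "\<epsilon> * real_of_int (XX n s) = \<bar>\<epsilon>\<bar> * real n" using z(2-4) h0 unfolding z(1) by linarith
qed



lemma ivt_down:
  fixes g :: "'a \<Rightarrow> int"
  assumes "\<forall>k. Suc k < length p \<longrightarrow> \<bar>g (p!Suc k) - g (p!k)\<bar> \<le> 2" "\<forall>x\<in>set p. even (g x - t)"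
    "p \<noteq> []" "g (hd p) \<ge> t" "g (last p) \<le> t"
  shows "\<exists>x\<in>set p. g x = t"
  using assms
proof (induction p)
  case Nil then show ?case by simp
next
  case (Cons x xs)
  show ?case
  proof (cases "g x = t")
    case True then show ?thesis by simp
  next
    case False
    have ev: "even (g x - t)" using Cons.prems(2) by simp
    have "g x \<ge> t" using Cons.prems(4) by simp
    then have gx: "g x \<ge> t + 2" using ev False by presburger
    have xs: "xs \<noteq> []" using Cons.prems(5) False Cons.prems(4) by auto
    have "\<bar>g ((x#xs)!Suc 0) - g ((x#xs)!0)\<bar> \<le> 2" using Cons.prems(1) xs by auto
    then have "g (hd xs) \<ge> t" using gx xs by (auto simp: hd_conv_nth)
    moreover have "\<forall>k. Suc k < length xs \<longrightarrow> \<bar>g (xs!Suc k) - g (xs!k)\<bar> \<le> 2"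
    proof (intro allI impI)
      fix k assume "Suc k < length xs"
      then have "Suc (Suc k) < length (x#xs)" by simp
      then show "\<bar>g (xs!Suc k) - g (xs!k)\<bar> \<le> 2" using Cons.prems(1) by fastforce
    qed
    moreover have "g (last xs) \<le> t" using Cons.prems(5) xs by simp
    ultimately have "\<exists>y\<in>set xs. g y = t" using Cons.IH Cons.prems(2) xs by auto
    then show ?thesis by auto
  qed
qed

lemma ivt:
  fixes g :: "'a \<Rightarrow> int"
  assumes "\<forall>k. Suc k < length p \<longrightarrow> \<bar>g (p!Suc k) - g (p!k)\<bar> \<le> 2" "\<forall>x\<in>set p. even (g x - t)"
    "p \<noteq> []" "(g (hd p) \<ge> t \<and> g (last p) \<le> t) \<or> (g (hd p) \<le> t \<and> g (last p) \<ge> t)"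
  shows "\<exists>x\<in>set p. g x = t"
proof -
  { assume "g (hd p) \<ge> t \<and> g (last p) \<le> t"
    then have ?thesis using ivt_down[OF assms(1-3)] by auto }
  moreover
  { assume h: "g (hd p) \<le> t \<and> g (last p) \<ge> t"
    have "\<exists>x\<in>set p. - g x = - t"
    proof (rule ivt_down[where g="\<lambda>x. - g x"])
      show "\<forall>k. Suc k < length p \<longrightarrow> \<bar>- g (p!Suc k) - - g (p!k)\<bar> \<le> 2" using assms(1) by auto
      show "\<forall>x\<in>set p. even (- g x - - t)" using assms(2) by auto
    qed (use assms(3) h in auto)
    then have ?thesis by auto }
  ultimately show ?thesis using assms(4) by blast
qed

lemma block1_const:
  assumes "\<sigma> \<in> configs n" "S1 n \<sigma> = int n \<or> S1 n \<sigma> = - int n"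
  shows "\<exists>c. (c = 1 \<or> c = -1) \<and> (\<forall>j\<in>{1..n}. \<sigma> j = c) \<and> S1 n \<sigma> = c * int n"
  using assms(2)
proof
  assume h: "S1 n \<sigma> = int n"
  have "\<forall>j\<in>{1..n}. \<sigma> j = 1"
    using pm_all1[OF _ b1[OF assms(1)]] h by (simp add: S1_def)
  then show ?thesis using h by auto
next
  assume h: "S1 n \<sigma> = - int n"
  have "\<forall>j\<in>{1..n}. \<sigma> j = -1"
    using pm_allm1[OF _ b1[OF assms(1)]] h by (simp add: S1_def)
  then show ?thesis using h by (intro exI[of _ "-1"]) auto
qed

lemma block2_const:
  assumes "\<sigma> \<in> configs n" "S2 n \<sigma> = int n \<or> S2 n \<sigma> = - int n"
  shows "\<exists>c. (c = 1 \<or> c = -1) \<and> (\<forall>j\<in>{n+1..n+n}. \<sigma> j = c) \<and> S2 n \<sigma> = c * int n"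
  using assms(2)
proof
  assume h: "S2 n \<sigma> = int n"
  have "\<forall>j\<in>{n+1..n+n}. \<sigma> j = 1"
    using pm_all1[OF _ b2[OF assms(1)]] h by (simp add: S2_def)
  then show ?thesis using h by auto
next
  assume h: "S2 n \<sigma> = - int n"
  have "\<forall>j\<in>{n+1..n+n}. \<sigma> j = -1"
    using pm_allm1[OF _ b2[OF assms(1)]] h by (simp add: S2_def)
  then show ?thesis using h by (intro exI[of _ "-1"]) auto
qed

lemma blocks_eq:
  assumes "\<sigma> \<in> configs n" "\<tau> \<in> configs n" "S1 n \<sigma> = int n \<or> S1 n \<sigma> = - int n"
    "S2 n \<sigma> = int n \<or> S2 n \<sigma> = - int n" "S1 n \<tau> = S1 n \<sigma>" "S2 n \<tau> = S2 n \<sigma>"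
  shows "\<sigma> = \<tau>"
proof -
  obtain c where c: "\<forall>j\<in>{1..n}. \<sigma> j = c" "S1 n \<sigma> = c * int n" using block1_const[OF assms(1,3)] by blast
  obtain c' where c': "\<forall>j\<in>{1..n}. \<tau> j = c'" "S1 n \<tau> = c' * int n" using block1_const[OF assms(2)] assms(3,5) by metis
  obtain d where d: "\<forall>j\<in>{n+1..n+n}. \<sigma> j = d" "S2 n \<sigma> = d * int n" using block2_const[OF assms(1,4)] by blast
  obtain d' where d': "\<forall>j\<in>{n+1..n+n}. \<tau> j = d'" "S2 n \<tau> = d' * int n" using block2_const[OF assms(2)] assms(4,6) by metis
  show ?thesis
  proof (cases "n = 0")
    case True
    then show ?thesis using assms(1,2) by (intro cfg_eq) auto
  next
    case False
    then have "c = c'" "d = d'" using c c' d d' assms(5,6) by auto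
    then show ?thesis using c c' d d' assms(1,2) by (intro cfg_eq) auto
  qed
qed

lemma configs_finite: "finite (configs n)"
proof -
  have "configs n \<subseteq> {f. \<forall>x. (x \<in> verts n \<longrightarrow> f x \<in> {1,-1}) \<and> (x \<notin> verts n \<longrightarrow> f x = 0)}"
    unfolding configs_def by auto
  moreover have "finite {f. \<forall>x. (x \<in> verts n \<longrightarrow> f x \<in> {1,-1::int}) \<and> (x \<notin> verts n \<longrightarrow> f x = 0)}"
    by (rule finite_set_of_finite_funs) (auto simp: verts_def)
  ultimately show ?thesis by (rule finite_subset)
qed

lemma S1_step: "neighbours n \<sigma> \<tau> \<Longrightarrow> \<bar>S1 n \<tau> - S1 n \<sigma>\<bar> \<le> 2"
  unfolding S1_def by (rule step2) (auto simp: verts_def)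
lemma S2_step: "neighbours n \<sigma> \<tau> \<Longrightarrow> \<bar>S2 n \<tau> - S2 n \<sigma>\<bar> \<le> 2"
  unfolding S2_def by (rule step2) (auto simp: verts_def)



definition tau :: "(nat \<Rightarrow> int) \<Rightarrow> (nat \<Rightarrow> int) \<Rightarrow> nat \<Rightarrow> nat \<Rightarrow> int" where
  "tau s1 s2 k = (\<lambda>j. if j \<le> k then s2 j else s1 j)"

lemma tau_cfg: "s1 \<in> configs n \<Longrightarrow> s2 \<in> configs n \<Longrightarrow> tau s1 s2 k \<in> configs n"
  unfolding configs_def tau_def by auto

lemma tau_step:
  assumes "s1 \<in> configs n" "s2 \<in> configs n"
  shows "tau s1 s2 k = tau s1 s2 (Suc k) \<or> neighbours n (tau s1 s2 k) (tau s1 s2 (Suc k))"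
proof (cases "s1 (Suc k) = s2 (Suc k)")
  case True
  then have "tau s1 s2 k = tau s1 s2 (Suc k)" unfolding tau_def by (auto simp: le_Suc_eq)
  then show ?thesis by blast
next
  case False
  have v: "Suc k \<in> verts n"
  proof (rule ccontr)
    assume "Suc k \<notin> verts n"
    then have "s1 (Suc k) = 0" "s2 (Suc k) = 0" using assms unfolding configs_def by blast+
    then show False using False by simp
  qed
  have "{i \<in> verts n. tau s1 s2 k i \<noteq> tau s1 s2 (Suc k) i} = {Suc k}"
    using v False unfolding tau_def by (auto simp: le_Suc_eq)
  then have "neighbours n (tau s1 s2 k) (tau s1 s2 (Suc k))"
    unfolding neighbours_def using tau_cfg[OF assms] by simp
  then show ?thesis by blast
qed

definition pth :: "nat \<Rightarrow> (nat \<Rightarrow> int) \<Rightarrow> (nat \<Rightarrow> int) \<Rightarrow> (nat \<Rightarrow> int) list" where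
  "pth n s1 s2 = remdups_adj (map (tau s1 s2) [0..<2*n+1])"

lemma pth_set: "set (pth n s1 s2) = tau s1 s2 ` {0..<2*n+1}"
  unfolding pth_def by (simp del: upt_Suc)

lemma pth_path:
  assumes "s1 \<in> configs n" "s2 \<in> configs n"
  shows "is_path n (pth n s1 s2) s1 s2"
proof -
  let ?xs = "map (tau s1 s2) [0..<2*n+1]"
  have ne: "pth n s1 s2 \<noteq> []" unfolding pth_def by simp
  have t0: "tau s1 s2 0 = s1"
  proof
    fix j show "tau s1 s2 0 j = s1 j"
    proof (cases "j = 0")
      case True
      then have "j \<notin> verts n" by (simp add: verts_def)
      then show ?thesis using assms True unfolding tau_def configs_def by auto
    qed (simp add: tau_def)
  qed
  have tl: "tau s1 s2 (2*n) = s2"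
  proof
    fix j show "tau s1 s2 (2*n) j = s2 j"
    proof (cases "j \<le> 2*n")
      case False
      then have "j \<notin> verts n" by (simp add: verts_def)
      then show ?thesis using assms False unfolding tau_def configs_def by auto
    qed (simp add: tau_def)
  qed
  have hd: "hd (pth n s1 s2) = s1" unfolding pth_def using t0 by (simp del: upt_Suc add: upt_conv_Cons)
  have lst: "last (pth n s1 s2) = s2" unfolding pth_def using tl by (simp del: upt_Suc add: last_map)
  have sub: "set (pth n s1 s2) \<subseteq> configs n" unfolding pth_set using tau_cfg[OF assms] by auto
  have "successively (\<lambda>x y. x = y \<or> neighbours n x y) ?xs"
    unfolding successively_conv_nth
  proof (intro allI impI)
    fix i assume "Suc i < length ?xs"
    then have "Suc i < 2*n+1" by simp
    then have "?xs ! i = tau s1 s2 i" "?xs ! Suc i = tau s1 s2 (Suc i)"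
      by (simp_all del: upt_Suc add: nth_map)
    then show "?xs ! i = ?xs ! Suc i \<or> neighbours n (?xs ! i) (?xs ! Suc i)"
      using tau_step[OF assms, of i] by simp
  qed
  then have "successively (\<lambda>x y. x = y \<or> neighbours n x y) (pth n s1 s2)"
    unfolding pth_def by (rule successively_remdups_adjI)
  then have "\<forall>k. Suc k < length (pth n s1 s2) \<longrightarrow> neighbours n (pth n s1 s2 ! k) (pth n s1 s2 ! Suc k)"
    using remdups_adj_adjacent unfolding successively_conv_nth pth_def by metis
  then show ?thesis unfolding is_path_def using ne hd lst sub by blast
qed



lemma core_up:
  fixes u c :: int and \<epsilon> :: real
  assumes "\<bar>u\<bar> \<le> int n" "even (u - int n)" "c = 1 \<or> c = -1" "\<bar>\<epsilon>\<bar> \<le> 1"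
  shows "(real n ^ 2 - real_of_int u ^ 2) / 2 + \<bar>\<epsilon>\<bar> * real n - \<epsilon> * real_of_int (c * u)
     \<le> (real n ^ 2 - real_of_int (tt n) ^ 2) / 2 + \<bar>\<epsilon>\<bar> * (real n - tt n)"
proof -
  define w where "w = (if \<epsilon> * c \<ge> 0 then u else - u)"
  have w1: "\<bar>w\<bar> \<le> int n" using assms(1) unfolding w_def by auto
  have "even (- u - int n)" using assms(2) by presburger
  then have w2: "even (w - int n)" using assms(2) unfolding w_def by simp
  have w3: "real_of_int w ^ 2 = real_of_int u ^ 2" unfolding w_def by auto
  have w4: "\<epsilon> * real_of_int (c * u) = \<bar>\<epsilon>\<bar> * real_of_int w"
    using assms(3) unfolding w_def by (auto simp: abs_if)
  have "(real n ^ 2 - real_of_int w ^ 2) / 2 + \<bar>\<epsilon>\<bar> * (real n - w)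
     \<le> (real n ^ 2 - real_of_int (tt n) ^ 2) / 2 + \<bar>\<epsilon>\<bar> * (real n - tt n)"
    by (rule upper_arith[OF w1 w2]) (use assms(4) in auto)
  then show ?thesis using w3 w4 by (simp add: algebra_simps)
qed

lemma tau_energy:
  assumes "s1 \<in> stable_states n \<epsilon> 0" "s2 \<in> stable_states n \<epsilon> 0" "\<bar>\<epsilon>\<bar> \<le> 1"
  shows "Ham n \<epsilon> 0 (tau s1 s2 k) - H0 n \<epsilon> \<le> (real n ^ 2 - real_of_int (tt n) ^ 2) / 2 + \<bar>\<epsilon>\<bar> * (real n - tt n)"
proof -
  note p1 = stable_props[OF assms(1)] and p2 = stable_props[OF assms(2)]
  let ?s = "tau s1 s2 k"
  have sc: "?s \<in> configs n" using tau_cfg p1(1) p2(1) by blast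
  note D = D_formula[OF sc, where \<epsilon>=\<epsilon>]
  show ?thesis
  proof (cases "k \<le> n")
    case True
    obtain c where c: "c = 1 \<or> c = -1" "\<forall>j\<in>{n+1..n+n}. s1 j = c" "S2 n s1 = c * int n"
      using block2_const[OF p1(1) p1(4)] by blast
    have e2: "S2 n ?s = S2 n s1" unfolding S2_def tau_def using True by (intro sum.cong) auto
    have ex: "XX n ?s = c * S1 n ?s"
    proof -
      have "XX n ?s = (\<Sum>i\<in>{1..n}. c * ?s i)" unfolding XX_def
        using True c(2) by (intro sum.cong) (auto simp: tau_def)
      then show ?thesis by (simp add: S1_def sum_distrib_left)
    qed
    have z: "(real n ^ 2 - real_of_int (S2 n ?s) ^ 2) / 2 = 0" using e2 c(1,3) by auto
    show ?thesis unfolding D z ex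
      using core_up[OF S1_abs[OF sc] S1_par[OF sc] c(1) assms(3)] by simp
  next
    case False
    obtain c where c: "c = 1 \<or> c = -1" "\<forall>j\<in>{1..n}. s2 j = c" "S1 n s2 = c * int n"
      using block1_const[OF p2(1) p2(3)] by blast
    have e1: "S1 n ?s = S1 n s2" unfolding S1_def tau_def using False by (intro sum.cong) auto
    have ex: "XX n ?s = c * S2 n ?s"
    proof -
      have "XX n ?s = (\<Sum>i\<in>{1..n}. c * ?s (i+n))" unfolding XX_def
        using False c(2) by (intro sum.cong) (auto simp: tau_def)
      then show ?thesis by (simp add: S2_shift sum_distrib_left)
    qed
    have z: "(real n ^ 2 - real_of_int (S1 n ?s) ^ 2) / 2 = 0" using e1 c(1,3) by auto
    show ?thesis unfolding D z ex
      using core_up[OF S2_abs[OF sc] S2_par[OF sc] c(1) assms(3)] by simp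
  qed
qed



lemma par_t: "even (x - int n) \<Longrightarrow> even (x - tt n)"
proof -
  assume a: "even (x - int n)"
  have e1: "even (int n - tt n)" unfolding tt_def by (cases "even n") auto
  have "x - tt n = (x - int n) + (int n - tt n)" by simp
  then show ?thesis using e1 a by (metis even_add)
qed

lemma tt_range: "n \<ge> 2 \<Longrightarrow> - int n \<le> tt n \<and> tt n \<le> int n"
  unfolding tt_def by auto

lemma lower_path:
  assumes n2: "n \<ge> 2" and e1: "\<bar>\<epsilon>\<bar> \<le> 1"
    and st1: "s1 \<in> stable_states n \<epsilon> 0" and st2: "s2 \<in> stable_states n \<epsilon> 0" and ne: "s1 \<noteq> s2"
    and pa: "is_path n p s1 s2"
  shows "\<exists>\<sigma>\<in>set p. (real n ^ 2 - real_of_int (tt n) ^ 2) / 2 + \<bar>\<epsilon>\<bar> * (real n - tt n) \<le> Ham n \<epsilon> 0 \<sigma> - H0 n \<epsilon>"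
proof -
  note p1 = stable_props[OF st1] and p2 = stable_props[OF st2]
  have pne: "p \<noteq> []" and phd: "hd p = s1" and plast: "last p = s2" and psub: "set p \<subseteq> configs n"
    and pnb: "\<forall>k. Suc k < length p \<longrightarrow> neighbours n (p ! k) (p ! Suc k)"
    using pa unfolding is_path_def by auto
  define t where "t = tt n"
  have tr: "- int n \<le> t" "t \<le> int n" using tt_range[OF n2] unfolding t_def by auto
  have t01: "t = 0 \<or> t = -1" unfolding t_def tt_def by auto
  show ?thesis
  proof (cases "\<epsilon> = 0")
    case True
    have "S1 n s1 \<noteq> S1 n s2 \<or> S2 n s1 \<noteq> S2 n s2"
      using blocks_eq[OF p1(1) p2(1) p1(3) p1(4)] ne by auto
    then show ?thesis
    proof
      assume d: "S1 n s1 \<noteq> S1 n s2"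
      have "\<exists>x\<in>set p. S1 n x = t"
      proof (rule ivt)
        show "\<forall>k. Suc k < length p \<longrightarrow> \<bar>S1 n (p!Suc k) - S1 n (p!k)\<bar> \<le> 2"
          using pnb S1_step by blast
        show "\<forall>x\<in>set p. even (S1 n x - t)" using psub S1_par par_t unfolding t_def by blast
        show "(S1 n (hd p) \<ge> t \<and> S1 n (last p) \<le> t) \<or> (S1 n (hd p) \<le> t \<and> S1 n (last p) \<ge> t)"
          unfolding phd plast using d p1(3) p2(3) tr by auto
      qed (rule pne)
      then obtain x where x: "x \<in> set p" "S1 n x = t" by blast
      have xc: "x \<in> configs n" using x psub by auto
      note D = D_formula[OF xc, where \<epsilon>=\<epsilon>] terms_nonneg(2)[OF xc] terms_nonneg(3)[OF xc, where \<epsilon>=\<epsilon>]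
      have "(real n ^ 2 - real_of_int (tt n) ^ 2) / 2 + \<bar>\<epsilon>\<bar> * (real n - tt n) \<le> Ham n \<epsilon> 0 x - H0 n \<epsilon>"
        using D x(2) True unfolding t_def by simp
      then show ?thesis using x by blast
    next
      assume d: "S2 n s1 \<noteq> S2 n s2"
      have "\<exists>x\<in>set p. S2 n x = t"
      proof (rule ivt)
        show "\<forall>k. Suc k < length p \<longrightarrow> \<bar>S2 n (p!Suc k) - S2 n (p!k)\<bar> \<le> 2"
          using pnb S2_step by blast
        show "\<forall>x\<in>set p. even (S2 n x - t)" using psub S2_par par_t unfolding t_def by blast
        show "(S2 n (hd p) \<ge> t \<and> S2 n (last p) \<le> t) \<or> (S2 n (hd p) \<le> t \<and> S2 n (last p) \<ge> t)"
          unfolding phd plast using d p1(4) p2(4) tr by auto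
      qed (rule pne)
      then obtain x where x: "x \<in> set p" "S2 n x = t" by blast
      have xc: "x \<in> configs n" using x psub by auto
      note D = D_formula[OF xc, where \<epsilon>=\<epsilon>] terms_nonneg(1)[OF xc] terms_nonneg(3)[OF xc, where \<epsilon>=\<epsilon>]
      have "(real n ^ 2 - real_of_int (tt n) ^ 2) / 2 + \<bar>\<epsilon>\<bar> * (real n - tt n) \<le> Ham n \<epsilon> 0 x - H0 n \<epsilon>"
        using D x(2) True unfolding t_def by simp
      then show ?thesis using x by blast
    qed
  next
    case False
    define cc :: int where "cc = (if \<epsilon> \<ge> 0 then 1 else -1)"
    define T where "T = (\<lambda>\<sigma>. cc * S2 n \<sigma>)"
    define Y where "Y = (\<lambda>\<sigma>. cc * XX n \<sigma>)"
    have ccv: "cc = 1 \<or> cc = -1" unfolding cc_def by auto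
    have epsY: "\<epsilon> * real_of_int (XX n \<sigma>) = \<bar>\<epsilon>\<bar> * real_of_int (Y \<sigma>)" for \<sigma>
      unfolding Y_def cc_def by auto
    have Yle: "Y \<sigma> \<le> int n - \<bar>S1 n \<sigma> - T \<sigma>\<bar>" if "\<sigma> \<in> configs n" for \<sigma>
      using XX_le[OF that] XX_ge[OF that] unfolding Y_def T_def cc_def by auto
    have Tsq: "real_of_int (T \<sigma>) ^ 2 = real_of_int (S2 n \<sigma>) ^ 2" for \<sigma>
      unfolding T_def using ccv by auto
    have Tpar: "even (T \<sigma> - int n)" if "\<sigma> \<in> configs n" for \<sigma>
    proof -
      have a: "even (S2 n \<sigma> - int n)" using S2_par[OF that] .
      then have "even (- S2 n \<sigma> - int n)" by presburger
      then show ?thesis using a ccv unfolding T_def by auto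
    qed
    have Tstep: "\<bar>T \<tau> - T \<sigma>\<bar> \<le> 2" if "neighbours n \<sigma> \<tau>" for \<sigma> \<tau>
      using S2_step[OF that] ccv unfolding T_def by (auto simp: abs_minus_commute)
    have eqS: "S1 n s = T s" if "s \<in> stable_states n \<epsilon> 0" for s
    proof -
      note ps = stable_props[OF that]
      have "\<bar>\<epsilon>\<bar> * real_of_int (Y s) = \<bar>\<epsilon>\<bar> * real n" using ps(5) epsY by simp
      then have "Y s = int n" using False by simp
      then show ?thesis using Yle[OF ps(1)] by simp
    qed
    have d: "S1 n s1 \<noteq> S1 n s2"
    proof
      assume h: "S1 n s1 = S1 n s2"
      then have "T s1 = T s2" using eqS st1 st2 by metis
      then have "S2 n s1 = S2 n s2" unfolding T_def using ccv by auto
      then show False using blocks_eq[OF p1(1) p2(1) p1(3) p1(4)] h ne by auto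
    qed
    define g where "g = (\<lambda>\<sigma>. min (S1 n \<sigma>) (T \<sigma>))"
    have "\<exists>x\<in>set p. g x = t"
    proof (rule ivt)
      show "\<forall>k. Suc k < length p \<longrightarrow> \<bar>g (p!Suc k) - g (p!k)\<bar> \<le> 2"
      proof (intro allI impI)
        fix k assume "Suc k < length p"
        then have nb: "neighbours n (p!k) (p!Suc k)" using pnb by blast
        show "\<bar>g (p!Suc k) - g (p!k)\<bar> \<le> 2"
          using S1_step[OF nb] Tstep[OF nb] unfolding g_def by linarith
      qed
      show "\<forall>x\<in>set p. even (g x - t)"
      proof
        fix x assume "x \<in> set p"
        then have xc: "x \<in> configs n" using psub by auto
        show "even (g x - t)"
          using par_t[OF S1_par[OF xc]] par_t[OF Tpar[OF xc]] unfolding g_def t_def by (simp add: min_def)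
      qed
      have "g s1 = S1 n s1" "g s2 = S1 n s2" unfolding g_def using eqS st1 st2 by auto
      then show "(g (hd p) \<ge> t \<and> g (last p) \<le> t) \<or> (g (hd p) \<le> t \<and> g (last p) \<ge> t)"
        unfolding phd plast using d p1(3) p2(3) tr by auto
    qed (rule pne)
    then obtain x where x: "x \<in> set p" "g x = t" by blast
    have xc: "x \<in> configs n" using x psub by auto
    have De: "Ham n \<epsilon> 0 x - H0 n \<epsilon> = (real n ^ 2 - real_of_int (S1 n x) ^ 2) / 2 + (real n ^ 2 - real_of_int (T x) ^ 2) / 2
       + \<bar>\<epsilon>\<bar> * real n - \<bar>\<epsilon>\<bar> * real_of_int (Y x)"
      using D_formula[OF xc, where \<epsilon>=\<epsilon>] epsY[of x] Tsq[of x] by simp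
    have Yx: "Y x \<le> int n - \<bar>S1 n x - T x\<bar>" using Yle[OF xc] .
    have ea: "0 \<le> \<bar>\<epsilon>\<bar>" by simp
    have "(real n ^ 2 - real_of_int (tt n) ^ 2) / 2 + \<bar>\<epsilon>\<bar> * (real n - tt n) \<le> Ham n \<epsilon> 0 x - H0 n \<epsilon>"
    proof (cases "S1 n x \<le> T x")
      case True
      then have s: "S1 n x = tt n" using x(2) unfolding g_def t_def by simp
      have "tt n \<le> T x" using True s by simp
      moreover have "T x \<le> int n" using S2_abs[OF xc] ccv unfolding T_def by auto
      moreover have "Y x \<le> int n - \<bar>tt n - T x\<bar>" using Yx s by simp
      ultimately show ?thesis using lower_arith[OF n2 _ _ _ ea e1] unfolding De s by simp
    next
      case False
      then have s: "T x = tt n" using x(2) unfolding g_def t_def by simp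
      have "tt n \<le> S1 n x" using False s by simp
      moreover have "S1 n x \<le> int n" using S1_abs[OF xc] by auto
      moreover have "Y x \<le> int n - \<bar>tt n - S1 n x\<bar>" using Yx s by (simp add: abs_minus_commute)
      ultimately have "(real n ^ 2 - real_of_int (tt n) ^ 2) / 2 + \<bar>\<epsilon>\<bar> * (real n - tt n)
          \<le> (real n ^ 2 - real_of_int (tt n) ^ 2) / 2 + (real n ^ 2 - real_of_int (S1 n x) ^ 2) / 2 + \<bar>\<epsilon>\<bar> * real n - \<bar>\<epsilon>\<bar> * Y x"
        using lower_arith[OF n2 _ _ _ ea e1] by simp
      then show ?thesis unfolding De s by simp
    qed
    then show ?thesis using x by blast
  qed
qed



theorem corollary4p6:
  fixes n :: nat and \<epsilon> :: real and s1 s2 :: "nat \<Rightarrow> int"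
  assumes "n \<ge> 2" and "-1 \<le> \<epsilon>" and "\<epsilon> \<le> 1"
    and "s1 \<in> stable_states n \<epsilon> 0" and "s2 \<in> stable_states n \<epsilon> 0" and "s1 \<noteq> s2"
  shows "Phi n \<epsilon> 0 s1 s2 - Ham n \<epsilon> 0 s1 =
    (if even n then real n ^ 2 / 2 + \<bar>\<epsilon>\<bar> * real n
     else (real n ^ 2 - 1) / 2 + \<bar>\<epsilon>\<bar> * (real n + 1))"
proof -
  define G where "G = (real n ^ 2 - real_of_int (tt n) ^ 2) / 2 + \<bar>\<epsilon>\<bar> * (real n - tt n)"
  have rhs: "(if even n then real n ^ 2 / 2 + \<bar>\<epsilon>\<bar> * real n
     else (real n ^ 2 - 1) / 2 + \<bar>\<epsilon>\<bar> * (real n + 1)) = G"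
    unfolding G_def tt_def by (cases "even n") auto
  have e1: "\<bar>\<epsilon>\<bar> \<le> 1" using assms(2,3) by auto
  note p1 = stable_props[OF assms(4)] and p2 = stable_props[OF assms(5)]
  define V where "V = {Max (Ham n \<epsilon> 0 ` set p) | p. is_path n p s1 s2}"
  define p0 where "p0 = pth n s1 s2"
  have p0p: "is_path n p0 s1 s2" unfolding p0_def by (rule pth_path[OF p1(1) p2(1)])
  have p0ne: "p0 \<noteq> []" using p0p unfolding is_path_def by auto
  have p0e: "Max (Ham n \<epsilon> 0 ` set p0) \<le> H0 n \<epsilon> + G"
  proof (subst Max_le_iff)
    show "finite (Ham n \<epsilon> 0 ` set p0)" by simp
    show "Ham n \<epsilon> 0 ` set p0 \<noteq> {}" using p0ne by simp
    show "\<forall>a\<in>Ham n \<epsilon> 0 ` set p0. a \<le> H0 n \<epsilon> + G"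
    proof
      fix a assume "a \<in> Ham n \<epsilon> 0 ` set p0"
      then obtain k where "a = Ham n \<epsilon> 0 (tau s1 s2 k)" unfolding p0_def pth_set by auto
      then show "a \<le> H0 n \<epsilon> + G" using tau_energy[OF assms(4,5) e1, of k] unfolding G_def by linarith
    qed
  qed
  have Vsub: "V \<subseteq> Ham n \<epsilon> 0 ` configs n"
  proof
    fix v assume "v \<in> V"
    then obtain p where p: "is_path n p s1 s2" "v = Max (Ham n \<epsilon> 0 ` set p)" unfolding V_def by blast
    have "p \<noteq> []" "set p \<subseteq> configs n" using p(1) unfolding is_path_def by auto
    then have "v \<in> Ham n \<epsilon> 0 ` set p" using p(2) Max_in[of "Ham n \<epsilon> 0 ` set p"] by auto
    then show "v \<in> Ham n \<epsilon> 0 ` configs n" using \<open>set p \<subseteq> configs n\<close> by auto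
  qed
  have Vfin: "finite V" using Vsub configs_finite finite_subset by blast
  have p0V: "Max (Ham n \<epsilon> 0 ` set p0) \<in> V" unfolding V_def using p0p by blast
  have Vlow: "\<forall>v\<in>V. H0 n \<epsilon> + G \<le> v"
  proof
    fix v assume "v \<in> V"
    then obtain p where p: "is_path n p s1 s2" "v = Max (Ham n \<epsilon> 0 ` set p)" unfolding V_def by blast
    obtain \<sigma> where s: "\<sigma> \<in> set p" "G \<le> Ham n \<epsilon> 0 \<sigma> - H0 n \<epsilon>"
      using lower_path[OF assms(1) e1 assms(4,5,6) p(1)] unfolding G_def by blast
    have "Ham n \<epsilon> 0 \<sigma> \<le> v" unfolding p(2) using s(1) by (intro Max_ge) auto
    then show "H0 n \<epsilon> + G \<le> v" using s(2) by linarith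
  qed
  have "Min V \<le> H0 n \<epsilon> + G" using Min_le[OF Vfin p0V] p0e by linarith
  moreover have "Min V \<in> V" using Vfin p0V by (intro Min_in) auto
  ultimately have "Min V = H0 n \<epsilon> + G" using Vlow by force
  then have "Phi n \<epsilon> 0 s1 s2 = H0 n \<epsilon> + G" unfolding Phi_def V_def by simp
  then show ?thesis unfolding rhs using p1(2) by simp
qed


end
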